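(* Let $p\ge5$, $n\ge0$, and let $\mu<\nu$ be two integers in $\{M_{n-1}+1,\dots,M_n\}$ whose nzm-codes both end with the digit $1$, such that no integer strictly between $\mu$ and $\nu$ has an nzm-code ending with $1$. Then $\nu-\mu=p-3$ if and only if the nzm-code of $\nu$ ends with $11$; otherwise $\nu-\mu=p-2$.
   Context: Fix $p\ge5$. Metallic numbers: $m_{-1}=0$, $m_0=1$, $m_{n+2}=(p-2)m_{n+1}-m_n$; $M_n=\sum_{k=0}^n m_k$, $M_{-1}=0$. Write $x=p-2$, $d=p-3$. The nzm-code of a positive integer $n$ is the unique word $a_k\cdots a_0$ over the digits $\{1,\dots,p-2\}$ with $n=\sum a_i m_i$ containing no factor $x\,d^j\,x$ ($j\ge0$). *)

theory Defs
  imports Main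
begin

text \<open>Metallic numbers m_n (n >= 0); m_{-1} = 0 is implicit in m_1 = (p-2)*m_0 - m_{-1} = p-2.\<close>
fun metal :: "int \<Rightarrow> nat \<Rightarrow> int" where
  "metal p 0 = 1"
| "metal p (Suc 0) = p - 2"
| "metal p (Suc (Suc n)) = (p - 2) * metal p (Suc n) - metal p n"

definition Msum :: "int \<Rightarrow> int \<Rightarrow> int" where
  "Msum p k = (if k < 0 then 0 else (\<Sum>i\<le>nat k. metal p i))"

text \<open>Words are stored little-endian: the list w represents a_k ... a_0 with w ! i = a_i,
  so hd w is the last digit a_0.\<close>
definition word_val :: "int \<Rightarrow> int list \<Rightarrow> int" where
  "word_val p w = (\<Sum>i<length w. w ! i * metal p i)"

definition nzm_word :: "int \<Rightarrow> int list \<Rightarrow> bool" where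
  "nzm_word p w \<longleftrightarrow> (\<forall>a\<in>set w. 1 \<le> a \<and> a \<le> p - 2) \<and>
     \<not> (\<exists>u v j. w = u @ [p - 2] @ replicate j (p - 3) @ [p - 2] @ v)"

definition nzm_code :: "int \<Rightarrow> int \<Rightarrow> int list" where
  "nzm_code p n = (THE w. nzm_word p w \<and> word_val p w = n)"

end

theory Submission
  imports Defs
begin

fun okA :: "int \<Rightarrow> bool \<Rightarrow> int list \<Rightarrow> bool" where
  "okA p f [] = True"
| "okA p f (a # w) = (1 \<le> a \<and> a \<le> p - 2 \<and>
     (if a = p - 2 then \<not> f \<and> okA p True w
      else if a = p - 3 then okA p f w else okA p False w))"

definition patfree :: "int \<Rightarrow> int list \<Rightarrow> bool" where
  "patfree p w \<longleftrightarrow> \<not> (\<exists>u v j. w = u @ [p - 2] @ replicate j (p - 3) @ [p - 2] @ v)"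

definition S :: "int \<Rightarrow> nat \<Rightarrow> int" where "S p k = (\<Sum>i<k. metal p i)"

definition wvo :: "int \<Rightarrow> nat \<Rightarrow> int list \<Rightarrow> int" where
  "wvo p k w = (\<Sum>i<length w. w ! i * metal p (i + k))"

definition valB :: "int \<Rightarrow> int list \<Rightarrow> int" where "valB p V = word_val p (rev V)"

lemma metal_pos: assumes "p \<ge> 5" shows "1 \<le> metal p k \<and> metal p k \<le> metal p (Suc k)"
proof (induction k)
  case 0 then show ?case using assms by simp
next
  case (Suc k)
  have h: "(p-2) * metal p (Suc k) \<ge> 3 * metal p (Suc k)"
    by (rule mult_right_mono) (use Suc assms in auto)
  have "metal p (Suc (Suc k)) = (p-2)*metal p (Suc k) - metal p k" by simp
  with Suc h show ?case by linarith
qed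

lemma metal_d: assumes "p \<ge> 5" shows "(p-3) * metal p k \<le> metal p (Suc k)"
proof (cases k)
  case 0 then show ?thesis by simp
next
  case (Suc k')
  have "(p-3)*metal p (Suc k') = (p-2)*metal p (Suc k') - metal p (Suc k')" by (simp add: algebra_simps)
  moreover have "metal p (Suc (Suc k')) = (p-2)*metal p (Suc k') - metal p k'" by simp
  ultimately show ?thesis unfolding Suc using metal_pos[OF assms, of k'] by linarith
qed

lemma S_Suc: "S p (Suc k) = S p k + metal p k" by (simp add: S_def)
lemma S_0[simp]: "S p 0 = 0" by (simp add: S_def)
lemma S_nonneg: assumes "p \<ge> 5" shows "0 \<le> S p k"
proof -
  have "\<forall>i. 0 \<le> metal p i" using metal_pos[OF assms] by (meson dual_order.trans zero_le_one)
  then show ?thesis unfolding S_def by (simp add: sum_nonneg)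
qed
lemma S_mono: assumes "p \<ge> 5" "k \<le> k'" shows "S p k \<le> S p k'"
  using assms(2)
proof (induction k' rule: dec_induct)
  case base then show ?case by simp
next
  case (step n) then show ?case using metal_pos[OF assms(1), of n] by (simp add: S_Suc)
qed

lemma I1: "S p (Suc (Suc k)) = 1 + (p-2) * metal p k + (p-3) * S p k"
proof (induction k)
  case 0 then show ?case by (simp add: S_def)
next
  case (Suc k)
  then show ?case by (simp add: S_Suc algebra_simps)
qed

lemma wvo_Nil[simp]: "wvo p k [] = 0" by (simp add: wvo_def)
lemma wvo_Cons: "wvo p k (a # w) = a * metal p k + wvo p (Suc k) w"
  unfolding wvo_def length_Cons sum.lessThan_Suc_shift by simp
lemma wvo_append: "wvo p k (u @ v) = wvo p k u + wvo p (k + length u) v"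
  by (induction u arbitrary: k) (simp_all add: wvo_Cons)
lemma wv_wvo: "word_val p w = wvo p 0 w" by (simp add: word_val_def wvo_def)
lemma wvo_rep: "wvo p 0 (replicate j c) = c * S p j"
proof (induction j)
  case 0 then show ?case by simp
next
  case (Suc j)
  have "replicate (Suc j) c = replicate j c @ [c]" by (simp add: replicate_append_same)
  then show ?case using Suc by (simp add: wvo_append wvo_Cons S_Suc algebra_simps)
qed
lemma valB_Cons: "valB p (a # V) = valB p V + a * metal p (length V)"
  by (simp add: valB_def wv_wvo wvo_append wvo_Cons)
lemma valB_Nil[simp]: "valB p [] = 0" by (simp add: valB_def word_val_def)

lemma pat_Cons: "(\<exists>u v j. a # w = u @ [x] @ replicate j d @ [x] @ v) \<longleftrightarrow>
   (\<exists>u v j. w = u @ [x] @ replicate j d @ [x] @ v) \<or> (a = x \<and> (\<exists>j v. w = replicate j d @ x # v))"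
proof
  assume "\<exists>u v j. a # w = u @ [x] @ replicate j d @ [x] @ v"
  then obtain u v j where h: "a # w = u @ [x] @ replicate j d @ [x] @ v" by blast
  show "(\<exists>u v j. w = u @ [x] @ replicate j d @ [x] @ v) \<or> (a = x \<and> (\<exists>j v. w = replicate j d @ x # v))"
  proof (cases u)
    case Nil then show ?thesis using h by auto
  next
    case (Cons c u')
    then have "w = u' @ [x] @ replicate j d @ [x] @ v" using h by simp
    then show ?thesis by blast
  qed
next
  assume "(\<exists>u v j. w = u @ [x] @ replicate j d @ [x] @ v) \<or> (a = x \<and> (\<exists>j v. w = replicate j d @ x # v))"
  then show "\<exists>u v j. a # w = u @ [x] @ replicate j d @ [x] @ v"
  proof
    assume "\<exists>u v j. w = u @ [x] @ replicate j d @ [x] @ v"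
    then obtain u v j where "w = u @ [x] @ replicate j d @ [x] @ v" by blast
    then have "a # w = (a#u) @ [x] @ replicate j d @ [x] @ v" by simp
    then show ?thesis by blast
  next
    assume "a = x \<and> (\<exists>j v. w = replicate j d @ x # v)"
    then obtain j v where "a = x" "w = replicate j d @ x # v" by blast
    then have "a # w = [] @ [x] @ replicate j d @ [x] @ v" by simp
    then show ?thesis by blast
  qed
qed

lemma ex_rep_Cons: "x \<noteq> d \<Longrightarrow> (\<exists>j v. a # w = replicate j d @ x # v) \<longleftrightarrow>
   (a = x \<or> (a = d \<and> (\<exists>j v. w = replicate j d @ x # v)))"
proof
  assume "\<exists>j v. a # w = replicate j d @ x # v"
  then obtain j v where h: "a # w = replicate j d @ x # v" by blast
  show "a = x \<or> (a = d \<and> (\<exists>j v. w = replicate j d @ x # v))"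
  proof (cases j)
    case 0 then show ?thesis using h by simp
  next
    case (Suc j') then show ?thesis using h by auto
  qed
next
  assume h: "a = x \<or> (a = d \<and> (\<exists>j v. w = replicate j d @ x # v))"
  show "\<exists>j v. a # w = replicate j d @ x # v"
  proof (cases "a = x")
    case True
    then have "a # w = replicate 0 d @ x # w" by simp
    then show ?thesis by blast
  next
    case False
    then obtain j v where "a = d" "w = replicate j d @ x # v" using h by blast
    then have "a # w = replicate (Suc j) d @ x # v" by simp
    then show ?thesis by blast
  qed
qed

lemma okA_char: "p \<ge> 5 \<Longrightarrow> okA p f w \<longleftrightarrow> (\<forall>a\<in>set w. 1 \<le> a \<and> a \<le> p-2) \<and> patfree p w \<and>
   (f \<longrightarrow> \<not> (\<exists>j v. w = replicate j (p-3) @ (p-2) # v))"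
proof (induction w arbitrary: f)
  case Nil then show ?case by (simp add: patfree_def)
next
  case (Cons a w)
  have ne: "p - 2 \<noteq> p - 3" by simp
  show ?case
    unfolding patfree_def pat_Cons ex_rep_Cons[OF ne]
    using Cons.IH[of True] Cons.IH[of False] Cons.IH[of f] Cons.prems
    by (auto simp: patfree_def)
qed


lemma patfree_rev1: "patfree p w \<Longrightarrow> patfree p (rev w)"
proof -
  assume h: "patfree p w"
  show "patfree p (rev w)"
    unfolding patfree_def
  proof
    assume "\<exists>u v j. rev w = u @ [p - 2] @ replicate j (p - 3) @ [p - 2] @ v"
    then obtain u v j where "rev w = u @ [p - 2] @ replicate j (p - 3) @ [p - 2] @ v" by blast
    then have "w = rev (u @ [p - 2] @ replicate j (p - 3) @ [p - 2] @ v)" by (metis rev_rev_ident)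
    then have "w = rev v @ [p - 2] @ replicate j (p - 3) @ [p - 2] @ rev u" by simp
    then show False using h unfolding patfree_def by blast
  qed
qed

lemma patfree_rev: "patfree p (rev w) = patfree p w"
  using patfree_rev1[of p w] patfree_rev1[of p "rev w"] by auto

lemma okA_rev: "p \<ge> 5 \<Longrightarrow> okA p False (rev w) = okA p False w"
  by (simp add: okA_char patfree_rev)

lemma nzm_iff: "p \<ge> 5 \<Longrightarrow> nzm_word p w = okA p False w"
  by (simp add: okA_char nzm_word_def patfree_def)

lemma okA_F: "okA p f w \<Longrightarrow> okA p False w"
  by (induction w arbitrary: f) (auto split: if_splits)

lemma okA_tl: "okA p f (a # w) \<Longrightarrow> okA p False w"
  using okA_F by (auto split: if_splits)

lemma bound:
  assumes p: "p \<ge> 5"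
  shows "okA p f V \<Longrightarrow> S p (length V) \<le> valB p V \<and>
     valB p V \<le> (if f then (p-3) * S p (length V) else S p (Suc (length V)) - 1)"
proof (induction V arbitrary: f)
  case Nil then show ?case by (simp add: S_def)
next
  case (Cons a V)
  define k where "k = length V"
  define m where "m = metal p k"
  have m1: "1 \<le> m" using metal_pos[OF p] m_def by auto
  have dm: "(p-3)*m \<le> metal p (Suc k)" using metal_d[OF p] m_def by auto
  have Sk: "0 \<le> S p k" using S_nonneg[OF p] by auto
  have I: "S p (Suc (Suc k)) = 1 + (p-2)*m + (p-3) * S p k" using I1 m_def by auto
  have SS: "S p (Suc k) = S p k + m" using S_Suc m_def by auto
  have SS2: "S p (Suc (Suc k)) = S p (Suc k) + metal p (Suc k)" using S_Suc by auto
  have vB: "valB p (a # V) = valB p V + a * m" using valB_Cons m_def k_def by auto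
  have a1: "1 \<le> a" and a2: "a \<le> p - 2" using Cons.prems by auto
  have am: "m \<le> a * m" using a1 m1 by (simp add: mult_right_mono[of 1 a m, simplified])
  have IHF: "okA p False V \<Longrightarrow> S p k \<le> valB p V \<and> valB p V \<le> S p (Suc k) - 1"
    using Cons.IH[of False] k_def by simp
  have IHT: "okA p True V \<Longrightarrow> S p k \<le> valB p V \<and> valB p V \<le> (p-3) * S p k"
    using Cons.IH[of True] k_def by simp
  have e1: "(p-2)*m = (p-3)*m + m" by (simp add: algebra_simps)
  have e2: "(p-3) * S p (Suc k) = (p-3) * S p k + (p-3)*m" using SS by (simp add: algebra_simps)
  have e3: "S p k \<le> (p-3) * S p k" using Sk mult_right_mono[of 1 "p-3" "S p k"] p by simp
  have lowV: "S p k \<le> valB p V" using IHF okA_tl[OF Cons.prems] by blast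
  have low: "S p (Suc k) \<le> valB p (a # V)" using lowV vB SS am by linarith
  show ?case
  proof (cases "a = p - 2")
    case True
    then have f: "\<not> f" and o: "okA p True V" using Cons.prems by auto
    have "a * m = (p-2)*m" using True by simp
    then show ?thesis using IHT[OF o] f low vB I SS k_def by auto
  next
    case False
    then have ad: "a \<le> p - 3" using a2 by simp
    have adm: "a * m \<le> (p-3)*m" using ad m1 by (simp add: mult_right_mono)
    show ?thesis
    proof (cases "a = p - 3")
      case True
      then have o: "okA p f V" using Cons.prems by auto
      show ?thesis
      proof (cases f)
        case True
        then show ?thesis using IHT o low vB adm e2 k_def by auto
      next
        case False
        have "valB p V \<le> S p (Suc k) - 1" using IHF o False by simp
        then have u: "valB p (a#V) \<le> S p (Suc (Suc k)) - 1" using vB adm dm SS SS2 by linarith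
        then show ?thesis using low False k_def by simp
      qed
    next
      case False
      then have ad4: "a \<le> p - 4" using ad by simp
      have adm4: "a * m \<le> (p-4)*m" using ad4 m1 by (simp add: mult_right_mono)
      have e4: "(p-3)*m = (p-4)*m + m" by (simp add: algebra_simps)
      have o: "okA p False V" using Cons.prems False \<open>a \<noteq> p - 2\<close> by auto
      have v: "valB p V \<le> S p (Suc k) - 1" using IHF[OF o] by simp
      have u1: "valB p (a#V) \<le> (p-3) * S p (Suc k)" using v vB adm4 e4 e2 e3 SS by linarith
      have u2: "valB p (a#V) \<le> S p (Suc (Suc k)) - 1" using v vB adm dm SS SS2 by linarith
      show ?thesis using u1 u2 low k_def by simp
    qed
  qed
qed

lemma uniq_len:
  assumes p: "p \<ge> 5"
  shows "okA p f U \<Longrightarrow> okA p g V \<Longrightarrow> length U = length V \<Longrightarrow> valB p U = valB p V \<Longrightarrow> U = V"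
proof (induction U arbitrary: f g V)
  case Nil then show ?case by simp
next
  case (Cons a U)
  obtain b V' where V: "V = b # V'" using Cons.prems(3) by (cases V) auto
  define k where "k = length U"
  define m where "m = metal p k"
  have m1: "1 \<le> m" using metal_pos[OF p] m_def by auto
  have kV: "length V' = k" using Cons.prems(3) V k_def by simp
  have oU: "okA p False U" using okA_tl Cons.prems(1) by blast
  have oV: "okA p False V'" using okA_tl Cons.prems(2) V by blast
  have bU: "S p k \<le> valB p U \<and> valB p U \<le> S p (Suc k) - 1" using bound[OF p oU] k_def by simp
  have bV: "S p k \<le> valB p V' \<and> valB p V' \<le> S p (Suc k) - 1" using bound[OF p oV] kV by simp
  have SS: "S p (Suc k) = S p k + m" using S_Suc m_def by auto
  have eq: "valB p U + a * m = valB p V' + b * m"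
    using Cons.prems(4) V valB_Cons[of p a U] valB_Cons[of p b V'] kV k_def m_def by simp
  have ab: "a = b"
  proof (rule ccontr)
    assume "a \<noteq> b"
    then consider "a + 1 \<le> b" | "b + 1 \<le> a" by linarith
    then show False
    proof cases
      case 1
      then have "(a+1)*m \<le> b*m" using m1 by (simp add: mult_right_mono)
      then show False using eq bU bV SS by (simp add: algebra_simps)
    next
      case 2
      then have "(b+1)*m \<le> a*m" using m1 by (simp add: mult_right_mono)
      then show False using eq bU bV SS by (simp add: algebra_simps)
    qed
  qed
  then have "valB p U = valB p V'" using eq by simp
  then have "U = V'" using Cons.IH[OF oU oV] kV k_def by simp
  then show ?case using ab V by simp
qed

lemma uniq:
  assumes p: "p \<ge> 5" and oU: "okA p False U" and oV: "okA p False V" and e: "valB p U = valB p V"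
  shows "U = V"
proof -
  have bU: "S p (length U) \<le> valB p U \<and> valB p U \<le> S p (Suc (length U)) - 1" using bound[OF p oU] by simp
  have bV: "S p (length V) \<le> valB p V \<and> valB p V \<le> S p (Suc (length V)) - 1" using bound[OF p oV] by simp
  have "length U = length V"
  proof (rule ccontr)
    assume "length U \<noteq> length V"
    then consider "Suc (length U) \<le> length V" | "Suc (length V) \<le> length U" by linarith
    then show False
    proof cases
      case 1 then show False using S_mono[OF p 1] bU bV e by linarith
    next
      case 2 then show False using S_mono[OF p 2] bU bV e by linarith
    qed
  qed
  then show ?thesis using uniq_len[OF p oU oV] e by simp
qed

lemma code_eq:
  assumes p: "p \<ge> 5" and o: "okA p False w"
  shows "nzm_code p (word_val p w) = w"
  unfolding nzm_code_def
proof (rule the_equality)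
  show "nzm_word p w \<and> word_val p w = word_val p w" using nzm_iff[OF p] o by simp
next
  fix w' assume h: "nzm_word p w' \<and> word_val p w' = word_val p w"
  have o': "okA p False (rev w')" using h nzm_iff[OF p] okA_rev[OF p] by simp
  have o2: "okA p False (rev w)" using o okA_rev[OF p] by simp
  have "rev w' = rev w" using uniq[OF p o' o2] h by (simp add: valB_def)
  then show "w' = w" by simp
qed


lemma okA_rep_d: "p \<ge> 5 \<Longrightarrow> okA p f (replicate j (p-3) @ w) = okA p f w"
  by (induction j) auto

lemma okA_rep_1: "p \<ge> 5 \<Longrightarrow> okA p f (replicate (Suc j) 1 @ w) = okA p False w"
proof (induction j arbitrary: f)
  case 0 then show ?case by simp
next
  case (Suc j) then show ?case by simp
qed

lemma okA_ones: "p \<ge> 5 \<Longrightarrow> okA p f (replicate n 1)"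
  by (induction n arbitrary: f) auto

lemma decomp: "p \<ge> 5 \<Longrightarrow> okA p False r \<Longrightarrow> \<not> okA p True r \<Longrightarrow>
   \<exists>j rest. r = replicate j (p-3) @ (p-2) # rest"
proof (induction r)
  case Nil then show ?case by simp
next
  case (Cons a r)
  show ?case
  proof (cases "a = p - 2")
    case True
    then have "a # r = replicate 0 (p-3) @ (p-2) # r" by simp
    then show ?thesis by blast
  next
    case False
    show ?thesis
    proof (cases "a = p - 3")
      case True
      then have "okA p False r" "\<not> okA p True r" using Cons.prems by auto
      then obtain j rest where "r = replicate j (p-3) @ (p-2) # rest" using Cons.IH Cons.prems(1) by blast
      then have "a # r = replicate (Suc j) (p-3) @ (p-2) # rest" using True by simp
      then show ?thesis by blast
    next
      case False
      then show ?thesis using Cons.prems \<open>a \<noteq> p - 2\<close> by simp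
    qed
  qed
qed

lemma succ_lem:
  assumes p: "p \<ge> 5" and o: "okA p False (replicate j (p-3) @ (p-2) # rest)"
  shows "\<exists>w'. okA p False w' \<and> word_val p w' = word_val p (replicate j (p-3) @ (p-2) # rest) + 1
    \<and> take (Suc j) w' = replicate (Suc j) 1 \<and> (\<forall>b r'. rest = b # r' \<longrightarrow> w' = replicate (Suc j) 1 @ (b+1) # r')"
proof (cases rest)
  case Nil
  define w' where "w' = replicate (Suc (Suc j)) (1::int)"
  have o': "okA p False w'" unfolding w'_def by (rule okA_ones[OF p])
  have "word_val p w' = S p (Suc (Suc j))" using wvo_rep[of p "Suc (Suc j)" 1] w'_def by (simp add: wv_wvo)
  moreover have "word_val p (replicate j (p-3) @ (p-2) # rest) = (p-3) * S p j + (p-2) * metal p j"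
    using Nil by (simp add: wv_wvo wvo_append wvo_rep wvo_Cons)
  ultimately have "word_val p w' = word_val p (replicate j (p-3) @ (p-2) # rest) + 1" using I1[of p j] by simp
  moreover have "take (Suc j) w' = replicate (Suc j) 1" unfolding w'_def take_replicate by simp
  ultimately show ?thesis using o' Nil by blast
next
  case (Cons b r')
  define w' where "w' = replicate (Suc j) (1::int) @ (b+1) # r'"
  have oo: "okA p True (b # r')" using o Cons okA_rep_d[OF p] by (auto split: if_splits)
  have "okA p False ((b+1) # r')" using oo p by (auto split: if_splits)
  then have o': "okA p False w'" unfolding w'_def okA_rep_1[OF p] .
  have "word_val p w' = S p (Suc j) + (b+1) * metal p (Suc j) + wvo p (Suc (Suc j)) r'"
    unfolding w'_def wv_wvo wvo_append wvo_rep by (simp add: wvo_Cons)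
  moreover have "word_val p (replicate j (p-3) @ (p-2) # rest) = (p-3) * S p j + (p-2) * metal p j
      + b * metal p (Suc j) + wvo p (Suc (Suc j)) r'"
    using Cons by (simp add: wv_wvo wvo_append wvo_rep wvo_Cons)
  ultimately have "word_val p w' = word_val p (replicate j (p-3) @ (p-2) # rest) + 1"
    using I1[of p j] S_Suc[of p "Suc j"] by (simp add: algebra_simps)
  moreover have "take (Suc j) w' = replicate (Suc j) 1" using w'_def by simp
  ultimately show ?thesis using o' Cons w'_def by blast
qed

lemma existence:
  assumes p: "p \<ge> 5"
  shows "\<exists>w. okA p False w \<and> word_val p w = int k + 1"
proof (induction k)
  case 0
  show ?case
    by (rule exI[of _ "[1]"]) (use p in \<open>simp add: wv_wvo wvo_Cons\<close>)
next
  case (Suc k)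
  then obtain w where o: "okA p False w" and v: "word_val p w = int k + 1" by blast
  have "w \<noteq> []" using v by (auto simp: wv_wvo)
  then obtain a r where w: "w = a # r" by (cases w) auto
  have v': "word_val p w = a + wvo p 1 r" using w by (simp add: wv_wvo wvo_Cons)
  show ?case
  proof (cases "a = p - 2")
    case True
    then have "okA p False (replicate 0 (p-3) @ (p-2) # r)" using o w by simp
    from succ_lem[OF p this] obtain w' where "okA p False w'"
      "word_val p w' = word_val p (replicate 0 (p-3) @ (p-2) # r) + 1" by blast
    then show ?thesis using v w True by auto
  next
    case False
    show ?thesis
    proof (cases "a = p - 3")
      case True
      show ?thesis
      proof (cases "okA p True r")
        case True
        then have "okA p False ((p-2) # r)" using p by simp
        moreover have "word_val p ((p-2) # r) = int (Suc k) + 1"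
          using v v' \<open>a = p - 3\<close> by (simp add: wv_wvo wvo_Cons)
        ultimately show ?thesis by blast
      next
        case False
        have oR: "okA p False r" using o w \<open>a = p - 3\<close> by simp
        obtain j rest where r: "r = replicate j (p-3) @ (p-2) # rest" using decomp[OF p oR False] by blast
        have ww: "w = replicate (Suc j) (p-3) @ (p-2) # rest" using w r \<open>a = p - 3\<close> by simp
        from succ_lem[OF p o[unfolded ww]] obtain w' where "okA p False w'"
          "word_val p w' = word_val p w + 1" using ww by auto
        then show ?thesis using v by auto
      qed
    next
      case False
      have "okA p False ((a+1) # r)" using o w False \<open>a \<noteq> p - 2\<close> by auto
      moreover have "word_val p ((a+1) # r) = int (Suc k) + 1"
        using v v' by (simp add: wv_wvo wvo_Cons)
      ultimately show ?thesis by blast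
    qed
  qed
qed


lemma Msum_ge1: assumes p: "p \<ge> 5" and k: "k \<ge> 0" shows "1 \<le> Msum p k"
proof -
  have "metal p 0 \<le> (\<Sum>i\<le>nat k. metal p i)"
    by (rule member_le_sum) (use metal_pos[OF p] in \<open>auto intro: order_trans[OF zero_le_one]\<close>)
  then show ?thesis using k by (simp add: Msum_def)
qed

lemma Msum_nonneg: assumes p: "p \<ge> 5" shows "0 \<le> Msum p k"
  using Msum_ge1[OF p, of k] by (cases "k < 0") (auto simp: Msum_def)

lemma Msum0: "Msum p 0 = 1" by (simp add: Msum_def)

theorem lemma11:
  fixes p :: int and n :: nat and \<mu> \<nu> :: int
  assumes "p \<ge> 5"
    and "Msum p (int n - 1) + 1 \<le> \<mu>" and "\<mu> < \<nu>" and "\<nu> \<le> Msum p (int n)"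
    and "hd (nzm_code p \<mu>) = 1" and "hd (nzm_code p \<nu>) = 1"
    and "\<forall>k. \<mu> < k \<and> k < \<nu> \<longrightarrow> hd (nzm_code p k) \<noteq> 1"
  shows "(\<nu> - \<mu> = p - 3 \<longleftrightarrow> take 2 (nzm_code p \<nu>) = [1, 1])
       \<and> (take 2 (nzm_code p \<nu>) \<noteq> [1, 1] \<longrightarrow> \<nu> - \<mu> = p - 2)"
proof -
  have p: "p \<ge> 5" using assms(1) .
  have mu1: "\<mu> \<ge> 1" using assms(2) Msum_nonneg[OF p, of "int n - 1"] by linarith
  obtain w0 where o0: "okA p False w0" and v0: "word_val p w0 = \<mu>"
    using existence[OF p, of "nat (\<mu> - 1)"] mu1 by auto
  have c0: "nzm_code p \<mu> = w0" using code_eq[OF p o0] v0 by simp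
  have "w0 \<noteq> []" using v0 mu1 by (auto simp: wv_wvo)
  then obtain a r where w0: "w0 = a # r" by (cases w0) auto
  have a1: "a = 1" using assms(5) c0 w0 by simp
  have oR: "okA p False r" using o0 w0 a1 p by simp
  have muv: "\<mu> = 1 + wvo p 1 r" using v0 w0 a1 by (simp add: wv_wvo wvo_Cons)
  have codes: "nzm_code p (\<mu> + c - 1) = c # r" if "2 \<le> c" "c \<le> p - 3" for c
  proof -
    have "okA p False (c # r)" using that oR by auto
    moreover have "word_val p (c # r) = \<mu> + c - 1" using muv by (simp add: wv_wvo wvo_Cons)
    ultimately show ?thesis using code_eq[OF p] by metis
  qed
  have between: "hd (nzm_code p k) \<noteq> 1" if "\<mu> < k" "k \<le> \<mu> + p - 4" for k
  proof -
    have "nzm_code p (\<mu> + (k - \<mu> + 1) - 1) = (k - \<mu> + 1) # r" using codes[of "k - \<mu> + 1"] that by linarith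
    then show ?thesis using that by simp
  qed
  show ?thesis
  proof (cases "okA p True r")
    case True
    have oX: "okA p False ((p-2) # r)" using True p by simp
    have "word_val p ((p-2) # r) = \<mu> + p - 3" using muv by (simp add: wv_wvo wvo_Cons)
    then have cA: "nzm_code p (\<mu> + p - 3) = (p-2) # r" using code_eq[OF p oX] by simp
    have "r \<noteq> []"
    proof
      assume "r = []"
      then have "\<mu> = 1" using muv by simp
      show False
      proof (cases n)
        case 0 then show ?thesis using assms(3,4) \<open>\<mu> = 1\<close> Msum0[of p] by simp
      next
        case (Suc n') then show ?thesis using assms(2) \<open>\<mu> = 1\<close> Msum_ge1[OF p, of "int n - 1"] by simp
      qed
    qed
    then obtain b r' where r: "r = b # r'" by (cases r) auto
    have "okA p False (replicate 0 (p-3) @ (p-2) # r)" using oX by simp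
    from succ_lem[OF p this] obtain w' where o': "okA p False w'"
      and v': "word_val p w' = word_val p (replicate 0 (p-3) @ (p-2) # r) + 1"
      and s': "\<forall>b r''. r = b # r'' \<longrightarrow> w' = replicate (Suc 0) 1 @ (b+1) # r''" by blast
    have w': "w' = 1 # (b+1) # r'" using s' r by simp
    have b1: "1 \<le> b" using True r by simp
    have "word_val p w' = \<mu> + p - 2" using v' \<open>word_val p ((p-2) # r) = \<mu> + p - 3\<close> by simp
    then have cB: "nzm_code p (\<mu> + p - 2) = 1 # (b+1) # r'" using code_eq[OF p o'] w' by simp
    have nu: "\<nu> = \<mu> + p - 2"
    proof (rule ccontr)
      assume "\<nu> \<noteq> \<mu> + p - 2"
      then consider "\<nu> \<le> \<mu> + p - 4" | "\<nu> = \<mu> + p - 3" | "\<nu> > \<mu> + p - 2" by linarith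
      then show False
      proof cases
        case 1 then show False using between[of \<nu>] assms(3,6) by simp
      next
        case 2 then show False using cA assms(6) p by simp
      next
        case 3
        then have "hd (nzm_code p (\<mu> + p - 2)) \<noteq> 1" using assms(7) p by simp
        then show False using cB by simp
      qed
    qed
    then show ?thesis using cB b1 by simp
  next
    case False
    obtain j rest where r: "r = replicate j (p-3) @ (p-2) # rest" using decomp[OF p oR False] by blast
    have "okA p False (replicate (Suc j) (p-3) @ (p-2) # rest)" using oR r okA_rep_d[OF p] p by simp
    from succ_lem[OF p this] obtain w' where o': "okA p False w'"
      and v': "word_val p w' = word_val p (replicate (Suc j) (p-3) @ (p-2) # rest) + 1"
      and t': "take (Suc (Suc j)) w' = replicate (Suc (Suc j)) 1" by blast
    have "word_val p (replicate (Suc j) (p-3) @ (p-2) # rest) = word_val p ((p-3) # r)" using r by simp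
    also have "\<dots> = \<mu> + p - 4" using muv by (simp add: wv_wvo wvo_Cons)
    finally have "word_val p w' = \<mu> + p - 3" using v' by simp
    then have cB: "nzm_code p (\<mu> + p - 3) = w'" using code_eq[OF p o'] by simp
    have t2: "take 2 w' = [1, 1]"
    proof -
      have "take 2 w' = take 2 (take (Suc (Suc j)) w')" by (simp add: min_def numeral_2_eq_2)
      then show ?thesis using t' by (simp add: take_replicate)
    qed
    have "w' = take 2 w' @ drop 2 w'" by simp
    then have hw: "hd w' = 1" using t2 by (metis append_Cons hd_Cons_tl list.sel(1))
    have nu: "\<nu> = \<mu> + p - 3"
    proof (rule ccontr)
      assume "\<nu> \<noteq> \<mu> + p - 3"
      then consider "\<nu> \<le> \<mu> + p - 4" | "\<nu> > \<mu> + p - 3" by linarith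
      then show False
      proof cases
        case 1 then show False using between[of \<nu>] assms(3,6) by simp
      next
        case 2
        then have "hd (nzm_code p (\<mu> + p - 3)) \<noteq> 1" using assms(7) p by simp
        then show False using cB hw by simp
      qed
    qed
    then show ?thesis using cB t2 by simp
  qed
qed

end
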